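(* Let $p$ and $q$ be distinct primes. Let $G$ be a direct product of a normal cyclic Sylow $p$-subgroup $P$ and a minimal non-abelian $q$-subgroup $Q$. Then $G$ is exponent-critical.
   Context: A finite group $G$ is exponent-critical if $\exp(G)$ is not the least common multiple of the exponents of the proper non-abelian subgroups of $G$. A minimal non-abelian group is a non-abelian group all of whose proper subgroups are abelian. *)

theory Defs
  imports "HOL-Algebra.Algebra"
begin

definition group_exponent :: "('a, 'b) monoid_scheme \<Rightarrow> 'a set \<Rightarrow> nat" where
  "group_exponent G H = (LEAST n. 0 < n \<and> (\<forall>x\<in>H. x [^]\<^bsub>G\<^esub> n = \<one>\<^bsub>G\<^esub>))"

definition exponent_critical :: "('a, 'b) monoid_scheme \<Rightarrow> bool" where
  "exponent_critical G \<longleftrightarrow>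
     group_exponent G (carrier G) \<noteq>
     Lcm {group_exponent G H | H. subgroup H G \<and> H \<noteq> carrier G \<and> \<not> comm_group (G\<lparr>carrier := H\<rparr>)}"

definition minimal_nonabelian :: "('a, 'b) monoid_scheme \<Rightarrow> bool" where
  "minimal_nonabelian G \<longleftrightarrow> \<not> comm_group G \<and>
     (\<forall>H. subgroup H G \<and> H \<noteq> carrier G \<longrightarrow> comm_group (G\<lparr>carrier := H\<rparr>))"

end

theory Submission
  imports Defs
begin

lemma exp_props:
  fixes G (structure)
  assumes "group G" "finite (carrier G)" "H \<subseteq> carrier G"
  shows "0 < group_exponent G H \<and> (\<forall>x\<in>H. x [^]\<^bsub>G\<^esub> group_exponent G H = \<one>\<^bsub>G\<^esub>)"
proof -
  interpret group G by fact
  have "0 < order G \<and> (\<forall>x\<in>H. x [^] order G = \<one>)"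
    using assms pow_order_eq_1 order_gt_0_iff_finite by blast
  then show ?thesis unfolding group_exponent_def by (rule LeastI)
qed

lemma exp_dvd:
  fixes G (structure)
  assumes "group G" "finite (carrier G)" "H \<subseteq> carrier G" "0 < n"
    "\<forall>x\<in>H. x [^]\<^bsub>G\<^esub> n = \<one>\<^bsub>G\<^esub>"
  shows "group_exponent G H dvd n"
proof -
  interpret group G by fact
  let ?e = "group_exponent G H"
  have e: "0 < ?e" "\<forall>x\<in>H. x [^] ?e = \<one>" using exp_props[OF assms(1-3)] by auto
  have m: "\<forall>x\<in>H. x [^] (n mod ?e) = \<one>"
  proof
    fix x assume x: "x \<in> H"
    then have xc: "x \<in> carrier G" using assms(3) by auto
    have "ord x dvd n" "ord x dvd ?e" using x e assms(5) pow_eq_id[OF xc] by auto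
    then have "ord x dvd n mod ?e" by (simp add: dvd_mod)
    then show "x [^] (n mod ?e) = \<one>" using pow_eq_id[OF xc] by auto
  qed
  show ?thesis
  proof (rule ccontr)
    assume "\<not> ?thesis"
    then have "0 < n mod ?e" using dvd_eq_mod_eq_0 by auto
    then have "?e \<le> n mod ?e" using m unfolding group_exponent_def by (auto intro: Least_le)
    moreover have "n mod ?e < ?e" using e(1) by simp
    ultimately show False by simp
  qed
qed

lemma sub_pow_closed:
  fixes G (structure)
  assumes "group G" "subgroup H G" "x \<in> H"
  shows "x [^] (n::nat) \<in> H"
proof (induction n)
  case 0
  then show ?case using assms subgroup.one_closed by simp
next
  case (Suc n)
  then show ?case using assms subgroup.m_closed by (simp add: nat_pow_Suc)
qed

lemma main_aux:
  fixes G (structure) and P Q :: "'a set" and p q :: nat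
  assumes "group G" and "finite (carrier G)"
    and "Factorial_Ring.prime p" and "Factorial_Ring.prime q" and "p \<noteq> q"
    and "P \<lhd> G" and "card P = p ^ multiplicity p (order G)"
    and "cyclic_group (G\<lparr>carrier := P\<rparr>)"
    and "Q \<lhd> G" and "\<exists>k. card Q = q ^ k"
    and "minimal_nonabelian (G\<lparr>carrier := Q\<rparr>)"
    and "P \<inter> Q = {\<one>\<^bsub>G\<^esub>}" and "P <#>\<^bsub>G\<^esub> Q = carrier G"
  shows "exponent_critical G"
proof -
  interpret group G by fact
  define a where "a = multiplicity p (order G)"
  obtain k where cQ: "card Q = q ^ k" using assms(10) by blast
  have cP: "card P = p ^ a" using assms(7) a_def by simp
  have sP: "subgroup P G" and sQ: "subgroup Q G"
    using assms(6,9) normal_imp_subgroup by auto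
  have PG: "P \<subseteq> carrier G" and QG: "Q \<subseteq> carrier G"
    using sP sQ subgroup.subset by auto
  have finP: "finite P" and finQ: "finite Q"
    using PG QG assms(2) finite_subset by auto
  have comm: "u \<otimes> v = v \<otimes> u" if u: "u \<in> P" and v: "v \<in> Q" for u v
  proof -
    have uc: "u \<in> carrier G" and vc: "v \<in> carrier G" using u v PG QG by auto
    have "inv u \<in> P" using subgroup.m_inv_closed[OF sP u] .
    then have "v \<otimes> inv u \<otimes> inv v \<in> P"
      using normal.inv_op_closed2[OF assms(6) vc] by simp
    then have c1: "u \<otimes> (v \<otimes> inv u \<otimes> inv v) \<in> P" using subgroup.m_closed[OF sP u] by simp
    have "u \<otimes> v \<otimes> inv u \<in> Q"
      using normal.inv_op_closed2[OF assms(9) uc v] by simp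
    moreover have "inv v \<in> Q" using subgroup.m_inv_closed[OF sQ v] .
    ultimately have c2: "u \<otimes> v \<otimes> inv u \<otimes> inv v \<in> Q" using subgroup.m_closed[OF sQ] by simp
    have eq: "u \<otimes> (v \<otimes> inv u \<otimes> inv v) = u \<otimes> v \<otimes> inv u \<otimes> inv v"
      using uc vc by (simp add: m_assoc)
    have "u \<otimes> v \<otimes> inv u \<otimes> inv v = \<one>" using c1 c2 eq assms(12) by auto
    then have "u \<otimes> v \<otimes> inv u \<otimes> inv v \<otimes> v \<otimes> u = v \<otimes> u" using uc vc by simp
    then show ?thesis using uc vc by (simp add: m_assoc)
  qed
  have powP: "u [^] (p ^ a) = \<one>" if "u \<in> P" for u
  proof -
    interpret PP: group "G\<lparr>carrier := P\<rparr>" using subgroup.subgroup_is_group[OF sP] by simp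
    have "u [^]\<^bsub>G\<lparr>carrier := P\<rparr>\<^esub> order (G\<lparr>carrier := P\<rparr>) = \<one>\<^bsub>G\<lparr>carrier := P\<rparr>\<^esub>"
      using PP.pow_order_eq_1 that by simp
    then show ?thesis using cP nat_pow_consistent[of u _ P] by (simp add: order_def)
  qed
  have powQ: "v [^] (q ^ k) = \<one>" if "v \<in> Q" for v
  proof -
    interpret QQ: group "G\<lparr>carrier := Q\<rparr>" using subgroup.subgroup_is_group[OF sQ] by simp
    have "v [^]\<^bsub>G\<lparr>carrier := Q\<rparr>\<^esub> order (G\<lparr>carrier := Q\<rparr>) = \<one>\<^bsub>G\<lparr>carrier := Q\<rparr>\<^esub>"
      using QQ.pow_order_eq_1 that by simp
    then show ?thesis using cQ nat_pow_consistent[of v _ Q] by (simp add: order_def)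
  qed
  have decomp: "\<exists>u\<in>P. \<exists>v\<in>Q. x = u \<otimes> v" if "x \<in> carrier G" for x
  proof -
    have "x \<in> (\<Union>h\<in>P. \<Union>k\<in>Q. {h \<otimes> k})" using assms(13) that unfolding set_mult_def by simp
    then show ?thesis by blast
  qed
  have vH: "v \<in> H" if H: "subgroup H G" and v: "v \<in> Q" and vp: "v [^] (p ^ a) \<in> H" for H v
  proof -
    have vc: "v \<in> carrier G" using v QG by auto
    have "p ^ a \<noteq> 0" using assms(3) by (simp add: prime_gt_0_nat)
    then obtain s t where st: "p ^ a * s = q ^ k * t + gcd (p ^ a) (q ^ k)" using bezout_nat by blast
    have "coprime p q" using assms(3,4,5) primes_coprime by blast
    then have "gcd (p ^ a) (q ^ k) = 1" by simp
    then have "p ^ a * s = q ^ k * t + 1" using st by simp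
    then have "v [^] (p ^ a * s) = v [^] (q ^ k * t) \<otimes> v [^] (1::nat)"
      using vc by (simp add: nat_pow_mult)
    also have "\<dots> = (v [^] (q ^ k)) [^] t \<otimes> v" using vc by (simp add: nat_pow_pow)
    also have "\<dots> = v" using powQ[OF v] vc by simp
    finally have "v [^] (p ^ a * s) = v" .
    moreover have "v [^] (p ^ a * s) \<in> H" using sub_pow_closed[OF assms(1) H vp, of s] vc
      by (simp add: nat_pow_pow)
    ultimately show ?thesis by simp
  qed
  have decompH: "\<exists>u\<in>P \<inter> H. \<exists>v\<in>Q \<inter> H. x = u \<otimes> v" if H: "subgroup H G" and x: "x \<in> H" for H x
  proof -
    have xc: "x \<in> carrier G" using x H subgroup.subset by blast
    obtain u v where u: "u \<in> P" and v: "v \<in> Q" and xuv: "x = u \<otimes> v" using decomp[OF xc] by blast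
    have uc: "u \<in> carrier G" and vc: "v \<in> carrier G" using u v PG QG by auto
    have "x [^] (p ^ a) = u [^] (p ^ a) \<otimes> v [^] (p ^ a)"
      using xuv pow_mult_distrib[OF comm[OF u v] uc vc] by simp
    then have "x [^] (p ^ a) = v [^] (p ^ a)" using powP[OF u] vc by simp
    then have "v [^] (p ^ a) \<in> H" using sub_pow_closed[OF assms(1) H x] by metis
    then have vH': "v \<in> H" using vH[OF H v] by blast
    have "u = x \<otimes> inv v" using xuv uc vc by (simp add: m_assoc)
    then have "u \<in> H" using H x vH' subgroup.m_closed subgroup.m_inv_closed by metis
    then show ?thesis using u v vH' xuv by blast
  qed
  have Pcomm: "u \<otimes> w = w \<otimes> u" if "u \<in> P" "w \<in> P" for u w
  proof -
    interpret PP: group "G\<lparr>carrier := P\<rparr>" using subgroup.subgroup_is_group[OF sP] by simp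
    interpret PC: comm_group "G\<lparr>carrier := P\<rparr>" using PP.cyclic_imp_abelian_group assms(8) by blast
    show ?thesis using PC.m_comm[of u w] that by simp
  qed
  have QinH: "Q \<subseteq> H" if H: "subgroup H G" and nc: "\<not> comm_group (G\<lparr>carrier := H\<rparr>)" for H
  proof (rule ccontr)
    assume "\<not> Q \<subseteq> H"
    then have ne: "H \<inter> Q \<noteq> Q" by blast
    have s1: "subgroup (H \<inter> Q) G" using subgroups_Inter_pair[OF H sQ] .
    have "subgroup (H \<inter> Q) (G\<lparr>carrier := Q\<rparr>)" using subgroup_incl[OF s1 sQ] by blast
    then have "comm_group (G\<lparr>carrier := Q\<rparr>\<lparr>carrier := H \<inter> Q\<rparr>)"
      using assms(11) ne unfolding minimal_nonabelian_def by auto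
    then have hqc: "comm_group (G\<lparr>carrier := H \<inter> Q\<rparr>)" by simp
    have HQc: "x \<otimes> y = y \<otimes> x" if "x \<in> H \<inter> Q" "y \<in> H \<inter> Q" for x y
    proof -
      interpret HQ: comm_group "G\<lparr>carrier := H \<inter> Q\<rparr>" by (rule hqc)
      show ?thesis using HQ.m_comm[of x y] that by simp
    qed
    interpret HH: group "G\<lparr>carrier := H\<rparr>" using subgroup.subgroup_is_group[OF H] by simp
    have "comm_group (G\<lparr>carrier := H\<rparr>)"
    proof (rule HH.group_comm_groupI)
      fix x y assume "x \<in> carrier (G\<lparr>carrier := H\<rparr>)" "y \<in> carrier (G\<lparr>carrier := H\<rparr>)"
      then have x: "x \<in> H" and y: "y \<in> H" by auto
      obtain u1 v1 where u1: "u1 \<in> P \<inter> H" and v1: "v1 \<in> Q \<inter> H" and x1: "x = u1 \<otimes> v1"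
        using decompH[OF H x] by blast
      obtain u2 v2 where u2: "u2 \<in> P \<inter> H" and v2: "v2 \<in> Q \<inter> H" and y2: "y = u2 \<otimes> v2"
        using decompH[OF H y] by blast
      have c: "u1 \<in> carrier G" "u2 \<in> carrier G" "v1 \<in> carrier G" "v2 \<in> carrier G"
        using u1 u2 v1 v2 PG QG by auto
      have "x \<otimes> y = u1 \<otimes> (v1 \<otimes> u2) \<otimes> v2" using x1 y2 c by (simp add: m_assoc)
      also have "\<dots> = u1 \<otimes> (u2 \<otimes> v1) \<otimes> v2" using comm[of u2 v1] u2 v1 by simp
      also have "\<dots> = (u1 \<otimes> u2) \<otimes> (v1 \<otimes> v2)" using c by (simp add: m_assoc)
      also have "\<dots> = (u2 \<otimes> u1) \<otimes> (v2 \<otimes> v1)" using Pcomm[of u1 u2] HQc[of v1 v2] u1 u2 v1 v2 by auto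
      also have "\<dots> = u2 \<otimes> (u1 \<otimes> v2) \<otimes> v1" using c by (simp add: m_assoc)
      also have "\<dots> = u2 \<otimes> (v2 \<otimes> u1) \<otimes> v1" using comm[of u1 v2] u1 v2 by simp
      also have "\<dots> = u2 \<otimes> v2 \<otimes> (u1 \<otimes> v1)" using c by (simp add: m_assoc)
      finally show "x \<otimes>\<^bsub>G\<lparr>carrier := H\<rparr>\<^esub> y = y \<otimes>\<^bsub>G\<lparr>carrier := H\<rparr>\<^esub> x" using x1 y2 by simp
    qed
    then show False using nc by simp
  qed
  have notPH: "\<not> P \<subseteq> H" if H: "subgroup H G" and pr: "H \<noteq> carrier G" and nc: "\<not> comm_group (G\<lparr>carrier := H\<rparr>)" for H
  proof
    assume PH: "P \<subseteq> H"
    have QH: "Q \<subseteq> H" using QinH[OF H nc] .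
    have "carrier G \<subseteq> H"
    proof
      fix x assume "x \<in> carrier G"
      then obtain u v where uv: "u \<in> P" "v \<in> Q" "x = u \<otimes> v" using decomp by blast
      then have "u \<in> H" "v \<in> H" using PH QH by auto
      then show "x \<in> H" using uv(3) subgroup.m_closed[OF H] by simp
    qed
    then show False using pr subgroup.subset[OF H] by auto
  qed
  define N where "N = p ^ (a - 1) * q ^ k"
  have Nkill: "\<forall>x\<in>H. x [^] N = \<one>" if H: "subgroup H G" and pr: "H \<noteq> carrier G" and nc: "\<not> comm_group (G\<lparr>carrier := H\<rparr>)" for H
  proof
    fix x assume x: "x \<in> H"
    obtain u v where u: "u \<in> P \<inter> H" and v: "v \<in> Q \<inter> H" and xuv: "x = u \<otimes> v"
      using decompH[OF H x] by blast
    have uc: "u \<in> carrier G" and vc: "v \<in> carrier G" using u v PG QG by auto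
    have "ord u dvd p ^ a" using powP u pow_eq_id[OF uc] by auto
    then obtain j where j: "j \<le> a" "ord u = p ^ j" using divides_primepow_nat[OF assms(3)] by blast
    have "j \<noteq> a"
    proof
      assume "j = a"
      then have cg: "card (generate G {u}) = card P" using generate_pow_card[OF uc] j cP by simp
      have g1: "generate G {u} \<subseteq> P" using generate_subgroup_incl[OF _ sP] u by blast
      have g2: "generate G {u} \<subseteq> H" using generate_subgroup_incl[OF _ H] u by blast
      have "generate G {u} = P" using card_subset_eq[OF finP g1 cg] .
      then show False using g2 notPH[OF H pr nc] by simp
    qed
    then have "j \<le> a - 1" using j by simp
    then have "ord u dvd N" unfolding N_def using j(2) by (simp add: le_imp_power_dvd)
    then have uN: "u [^] N = \<one>" using pow_eq_id[OF uc] by simp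
    have "v [^] N = \<one>" unfolding N_def using powQ v vc
      by (metis IntE mult.commute nat_pow_one nat_pow_pow)
    moreover have cuv: "u \<otimes> v = v \<otimes> u" using comm u v by blast
    ultimately show "x [^] N = \<one>" using xuv uN pow_mult_distrib[OF cuv uc vc] vc by simp
  qed
  define e where "e = group_exponent G (carrier G)"
  have e: "0 < e" "\<forall>x\<in>carrier G. x [^] e = \<one>" using exp_props[OF assms(1,2)] e_def by auto
  have e1: "e \<noteq> 1"
  proof
    assume "e = 1"
    then have all1: "\<forall>x\<in>carrier G. x = \<one>" using e(2) by simp
    interpret QQ: group "G\<lparr>carrier := Q\<rparr>" using subgroup.subgroup_is_group[OF sQ] by simp
    have "comm_group (G\<lparr>carrier := Q\<rparr>)"
    proof (rule QQ.group_comm_groupI)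
      fix x y assume "x \<in> carrier (G\<lparr>carrier := Q\<rparr>)" "y \<in> carrier (G\<lparr>carrier := Q\<rparr>)"
      then have "x = \<one>" "y = \<one>" using all1 QG by auto
      then show "x \<otimes>\<^bsub>G\<lparr>carrier := Q\<rparr>\<^esub> y = y \<otimes>\<^bsub>G\<lparr>carrier := Q\<rparr>\<^esub> x" by simp
    qed
    then show False using assms(11) unfolding minimal_nonabelian_def by simp
  qed
  define S where "S = {group_exponent G H | H. subgroup H G \<and> H \<noteq> carrier G \<and> \<not> comm_group (G\<lparr>carrier := H\<rparr>)}"
  have "e \<noteq> Lcm S"
  proof (cases "a = 0")
    case True
    then have "card P = 1" using cP by simp
    then obtain z where "P = {z}" using card_1_singletonE by blast
    then have P1: "P = {\<one>}" using subgroup.one_closed[OF sP] by auto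
    have "S = {}"
    proof (rule ccontr)
      assume "S \<noteq> {}"
      then obtain H where H: "subgroup H G" "H \<noteq> carrier G" "\<not> comm_group (G\<lparr>carrier := H\<rparr>)"
        unfolding S_def by blast
      have "P \<subseteq> H" using P1 subgroup.one_closed[OF H(1)] by simp
      then show False using notPH[OF H] by simp
    qed
    then show "e \<noteq> Lcm S" using e1 by simp
  next
    case False
    have LN: "Lcm S dvd N"
    proof (rule Lcm_least)
      fix b assume "b \<in> S"
      then obtain H where H: "subgroup H G" "H \<noteq> carrier G" "\<not> comm_group (G\<lparr>carrier := H\<rparr>)"
        and b: "b = group_exponent G H" unfolding S_def by blast
      have "0 < N" unfolding N_def using assms(3,4) by (simp add: prime_gt_0_nat)
      then show "b dvd N" using exp_dvd[OF assms(1,2) subgroup.subset[OF H(1)] _ Nkill[OF H]] b by simp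
    qed
    show "e \<noteq> Lcm S"
    proof
      assume "e = Lcm S"
      then have eN: "e dvd N" using LN by simp
      obtain g where g: "g \<in> P" "subgroup_generated (G\<lparr>carrier := P\<rparr>) {g} = G\<lparr>carrier := P\<rparr>"
        using assms(8) unfolding cyclic_group_def by auto
      then have "carrier (subgroup_generated (G\<lparr>carrier := P\<rparr>) {g}) = P" by simp
      then have "generate (G\<lparr>carrier := P\<rparr>) {g} = P" using g(1) by (simp add: carrier_subgroup_generated)
      then have gen: "generate G {g} = P" using generate_consistent[of "{g}" P] sP g(1) by simp
      have gc: "g \<in> carrier G" using g PG by auto
      have og: "ord g = p ^ a" using generate_pow_card[OF gc] gen cP by simp
      have "g [^] e = \<one>" using e gc by simp
      then have "ord g dvd e" using pow_eq_id[OF gc] by simp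
      then have "p ^ a dvd p ^ (a - 1) * q ^ k" using eN og N_def by (metis dvd_trans)
      moreover have "coprime p q" using assms(3,4,5) primes_coprime by blast
      then have "coprime (p ^ a) (q ^ k)" by simp
      ultimately have "p ^ a dvd p ^ (a - 1)" using coprime_dvd_mult_left_iff by blast
      then have "p ^ a \<le> p ^ (a - 1)" using assms(3) by (simp add: dvd_imp_le prime_gt_0_nat)
      moreover have "p ^ (a - 1) < p ^ a" using False prime_gt_1_nat[OF assms(3)]
        by (simp add: power_strict_increasing_iff)
      ultimately show False by simp
    qed
  qed
  then show ?thesis unfolding exponent_critical_def e_def S_def by simp
qed

theorem mainTheorem7:
  fixes G :: "('a, 'b) monoid_scheme" and P Q :: "'a set" and p q :: nat
  assumes "group G" and "finite (carrier G)"
    and "Factorial_Ring.prime p" and "Factorial_Ring.prime q" and "p \<noteq> q"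
    and "P \<lhd> G" and "card P = p ^ multiplicity p (order G)"
    and "cyclic_group (G\<lparr>carrier := P\<rparr>)"
    and "Q \<lhd> G" and "\<exists>k. card Q = q ^ k"
    and "minimal_nonabelian (G\<lparr>carrier := Q\<rparr>)"
    and "P \<inter> Q = {\<one>\<^bsub>G\<^esub>}" and "P <#>\<^bsub>G\<^esub> Q = carrier G"
  shows "exponent_critical G"
  using main_aux[OF assms] .

end
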